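(* Let $G$ be a finitely generated group with a left-invariant total order $\prec$, and let $Z$ be a finitely generated central subgroup of $G$ which is cofinal for $\prec$. Then $P_\prec=\{g\in G\mid 1\prec g\}$ is coarsely connected.
   Context: A subgroup $Z$ is cofinal for $\prec$ if for every $g\in G$ there exist $h_1,h_2\in Z$ with $h_1\prec g\prec h_2$. Coarse connectedness is with respect to the word metric $d_X$ of a finite generating set $X$: a subset $S$ is coarsely connected if there is $r\ge1$ such that any two elements of $S$ are joined by a sequence $s_0,\dots,s_n$ in $S$ with $d_X(s_i,s_{i+1})\le r$. *)

theory Defs
  imports "HOL-Algebra.Generated_Groups"
begin

definition word_length :: "('a, 'b) monoid_scheme \<Rightarrow> 'a set \<Rightarrow> 'a \<Rightarrow> nat" where
  "word_length G X x = (LEAST n. \<exists>ws. set ws \<subseteq> X \<union> (\<lambda>y. inv\<^bsub>G\<^esub> y) ` X \<and> length ws = n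
       \<and> foldr (\<lambda>a b. a \<otimes>\<^bsub>G\<^esub> b) ws \<one>\<^bsub>G\<^esub> = x)"

definition word_dist :: "('a, 'b) monoid_scheme \<Rightarrow> 'a set \<Rightarrow> 'a \<Rightarrow> 'a \<Rightarrow> nat" where
  "word_dist G X g h = word_length G X (inv\<^bsub>G\<^esub> g \<otimes>\<^bsub>G\<^esub> h)"

definition coarsely_connected :: "('a, 'b) monoid_scheme \<Rightarrow> 'a set \<Rightarrow> 'a set \<Rightarrow> bool" where
  "coarsely_connected G X S \<longleftrightarrow>
     (\<exists>r::nat. r \<ge> 1 \<and> (\<forall>a\<in>S. \<forall>b\<in>S. \<exists>ss. ss \<noteq> [] \<and> hd ss = a \<and> last ss = b \<and> set ss \<subseteq> S \<and>
        (\<forall>i. Suc i < length ss \<longrightarrow> word_dist G X (ss ! i) (ss ! Suc i) \<le> r)))"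

definition left_invariant_total_order :: "('a, 'b) monoid_scheme \<Rightarrow> ('a \<Rightarrow> 'a \<Rightarrow> bool) \<Rightarrow> bool" where
  "left_invariant_total_order G lt \<longleftrightarrow>
     (\<forall>x\<in>carrier G. \<not> lt x x) \<and>
     (\<forall>x\<in>carrier G. \<forall>y\<in>carrier G. \<forall>z\<in>carrier G. lt x y \<longrightarrow> lt y z \<longrightarrow> lt x z) \<and>
     (\<forall>x\<in>carrier G. \<forall>y\<in>carrier G. x = y \<or> lt x y \<or> lt y x) \<and>
     (\<forall>g\<in>carrier G. \<forall>x\<in>carrier G. \<forall>y\<in>carrier G. lt x y \<longrightarrow> lt (g \<otimes>\<^bsub>G\<^esub> x) (g \<otimes>\<^bsub>G\<^esub> y))"

definition cofinal :: "('a, 'b) monoid_scheme \<Rightarrow> ('a \<Rightarrow> 'a \<Rightarrow> bool) \<Rightarrow> 'a set \<Rightarrow> bool" where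
  "cofinal G lt Z \<longleftrightarrow> (\<forall>g\<in>carrier G. \<exists>h1\<in>Z. \<exists>h2\<in>Z. lt h1 g \<and> lt g h2)"

definition positive_cone :: "('a, 'b) monoid_scheme \<Rightarrow> ('a \<Rightarrow> 'a \<Rightarrow> bool) \<Rightarrow> 'a set" where
  "positive_cone G lt = {g \<in> carrier G. lt \<one>\<^bsub>G\<^esub> g}"

end

theory Submission
  imports Defs
begin

lemma path_of_rtranclp:
  assumes "R\<^sup>*\<^sup>* a b" "\<And>x y. R x y \<Longrightarrow> x \<in> P \<and> y \<in> P" "a \<in> P"
  shows "\<exists>ss. ss \<noteq> [] \<and> hd ss = a \<and> last ss = b \<and> set ss \<subseteq> P \<and>
           (\<forall>i. Suc i < length ss \<longrightarrow> R (ss!i) (ss!Suc i))"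
  using assms(1,3)
proof (induction rule: converse_rtranclp_induct)
  case base
  then show ?case by (intro exI[of _ "[b]"]) auto
next
  case (step y z)
  then have "z \<in> P" using assms(2) by blast
  with step.IH obtain ss where ss: "ss \<noteq> []" "hd ss = z" "last ss = b" "set ss \<subseteq> P"
    "\<forall>i. Suc i < length ss \<longrightarrow> R (ss!i) (ss!Suc i)" by blast
  show ?case
  proof (intro exI[of _ "y # ss"] conjI allI impI)
    fix i assume i: "Suc i < length (y # ss)"
    show "R ((y # ss) ! i) ((y # ss) ! Suc i)"
    proof (cases i)
      case 0
      then show ?thesis using ss step.hyps(1) by (simp add: hd_conv_nth)
    next
      case (Suc j)
      then show ?thesis using ss i by simp
    qed
  qed (use ss step in auto)
qed

lemma foldr_closed:
  fixes G :: "('a, 'b) monoid_scheme" (structure)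
  assumes "group G" "set ws \<subseteq> carrier G"
  shows "foldr (\<lambda>a b. a \<otimes>\<^bsub>G\<^esub> b) ws \<one>\<^bsub>G\<^esub> \<in> carrier G"
proof -
  interpret group G by fact
  show ?thesis using assms(2) by (induction ws) auto
qed

lemma foldr_shift:
  fixes G :: "('a, 'b) monoid_scheme" (structure)
  assumes "group G" "set ws \<subseteq> carrier G" "c \<in> carrier G"
  shows "foldr (\<lambda>a b. a \<otimes>\<^bsub>G\<^esub> b) ws c = foldr (\<lambda>a b. a \<otimes>\<^bsub>G\<^esub> b) ws \<one>\<^bsub>G\<^esub> \<otimes>\<^bsub>G\<^esub> c"
proof -
  interpret group G by fact
  show ?thesis using assms(2)
  proof (induction ws)
    case Nil
    then show ?case using assms(3) by simp
  next
    case (Cons x ws)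
    then have "foldr (\<lambda>a b. a \<otimes> b) ws \<one> \<in> carrier G" using foldr_closed[OF assms(1)] by auto
    then show ?case using Cons assms(3) by (simp add: m_assoc)
  qed
qed

lemma words_exist:
  fixes G :: "('a, 'b) monoid_scheme" (structure)
  assumes "group G" "X \<subseteq> carrier G" "x \<in> generate G X"
  shows "\<exists>ws. set ws \<subseteq> X \<union> (\<lambda>y. inv\<^bsub>G\<^esub> y) ` X \<and> foldr (\<lambda>a b. a \<otimes>\<^bsub>G\<^esub> b) ws \<one>\<^bsub>G\<^esub> = x"
  using assms(3)
proof (induction rule: generate.induct)
  case one
  then show ?case by (intro exI[of _ "[]"]) simp
next
  case (incl h)
  interpret group G by fact
  show ?case using incl assms(2) by (intro exI[of _ "[h]"]) auto
next
  case (inv h)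
  interpret group G by fact
  show ?case using inv assms(2) by (intro exI[of _ "[inv h]"]) auto
next
  case (eng h1 h2)
  interpret group G by fact
  obtain w1 where w1: "set w1 \<subseteq> X \<union> (\<lambda>y. inv y) ` X" "foldr (\<lambda>a b. a \<otimes> b) w1 \<one> = h1"
    using eng by blast
  obtain w2 where w2: "set w2 \<subseteq> X \<union> (\<lambda>y. inv y) ` X" "foldr (\<lambda>a b. a \<otimes> b) w2 \<one> = h2"
    using eng by blast
  have c1: "set w1 \<subseteq> carrier G" "set w2 \<subseteq> carrier G" using w1 w2 assms(2) by auto
  have "foldr (\<lambda>a b. a \<otimes> b) (w1 @ w2) \<one> = foldr (\<lambda>a b. a \<otimes> b) w1 h2" using w2 by simp
  also have "\<dots> = h1 \<otimes> h2" using foldr_shift[OF assms(1) c1(1), of h2] w1 w2 foldr_closed[OF assms(1) c1(2)]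
    by simp
  finally show ?case using w1 w2 by (intro exI[of _ "w1 @ w2"]) auto
qed

lemma word_length_le:
  assumes "set ws \<subseteq> X \<union> (\<lambda>y. inv\<^bsub>G\<^esub> y) ` X" "foldr (\<lambda>a b. a \<otimes>\<^bsub>G\<^esub> b) ws \<one>\<^bsub>G\<^esub> = x"
  shows "word_length G X x \<le> length ws"
  unfolding word_length_def by (rule Least_le) (use assms in blast)

lemma word_length_letter:
  fixes G :: "('a, 'b) monoid_scheme" (structure)
  assumes "group G" "X \<subseteq> carrier G" "x \<in> X \<union> (\<lambda>y. inv\<^bsub>G\<^esub> y) ` X"
  shows "word_length G X x \<le> 1"
proof -
  interpret group G by fact
  have "x \<in> carrier G" using assms by auto
  then show ?thesis using word_length_le[of "[x]" X G x] assms(3) by simp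
qed

lemma mid_path:
  fixes G :: "('a, 'b) monoid_scheme" (structure)
  assumes "group G" "X \<subseteq> carrier G" "set ws \<subseteq> X \<union> (\<lambda>y. inv\<^bsub>G\<^esub> y) ` X" "a \<in> carrier G"
    "\<forall>i \<le> length ws. lt \<one>\<^bsub>G\<^esub> (a \<otimes>\<^bsub>G\<^esub> foldr (\<lambda>a b. a \<otimes>\<^bsub>G\<^esub> b) (take i ws) \<one>\<^bsub>G\<^esub>)"
    "1 \<le> r"
  shows "(\<lambda>x y. x \<in> positive_cone G lt \<and> y \<in> positive_cone G lt \<and> word_dist G X x y \<le> r)\<^sup>*\<^sup>*
           a (a \<otimes>\<^bsub>G\<^esub> foldr (\<lambda>a b. a \<otimes>\<^bsub>G\<^esub> b) ws \<one>\<^bsub>G\<^esub>)"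
  using assms(3,4,5)
proof (induction ws arbitrary: a)
  case Nil
  interpret group G by fact
  show ?case using Nil by simp
next
  case (Cons x ws)
  interpret group G by fact
  have x: "x \<in> carrier G" using Cons.prems assms(2) by auto
  have XC: "X \<union> (\<lambda>y. inv y) ` X \<subseteq> carrier G" using assms(2) by auto
  have wsc: "set ws \<subseteq> carrier G" using Cons.prems XC by auto
  have p0: "lt \<one> a" using Cons.prems(3)[rule_format, of 0] Cons.prems(2) by simp
  have p1: "lt \<one> (a \<otimes> x)" using Cons.prems(3)[rule_format, of 1] x by simp
  have wl: "word_length G X x \<le> 1" using word_length_letter[OF assms(1,2)] Cons.prems by auto
  have "word_dist G X a (a \<otimes> x) = word_length G X x"
    unfolding word_dist_def using x Cons.prems(2) by (simp add: m_assoc[symmetric])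
  then have step: "(\<lambda>x y. x \<in> positive_cone G lt \<and> y \<in> positive_cone G lt \<and> word_dist G X x y \<le> r) a (a \<otimes> x)"
    using p0 p1 wl assms(6) x Cons.prems(2) unfolding positive_cone_def by auto
  have "\<forall>i\<le>length ws. lt \<one> (a \<otimes> x \<otimes> foldr (\<lambda>a b. a \<otimes> b) (take i ws) \<one>)"
  proof (intro allI impI)
    fix i assume "i \<le> length ws"
    then have "lt \<one> (a \<otimes> foldr (\<lambda>a b. a \<otimes> b) (take (Suc i) (x # ws)) \<one>)"
      using Cons.prems(3) by auto
    moreover have "set (take i ws) \<subseteq> carrier G" using wsc by (meson order_trans set_take_subset)
    ultimately show "lt \<one> (a \<otimes> x \<otimes> foldr (\<lambda>a b. a \<otimes> b) (take i ws) \<one>)"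
      using x Cons.prems(2) foldr_closed[OF assms(1)] by (simp add: m_assoc)
  qed
  moreover have "set ws \<subseteq> X \<union> (\<lambda>y. inv y) ` X" using Cons.prems(1) by simp
  moreover have "a \<otimes> x \<in> carrier G" using x Cons.prems(2) by simp
  ultimately have "(\<lambda>x y. x \<in> positive_cone G lt \<and> y \<in> positive_cone G lt \<and> word_dist G X x y \<le> r)\<^sup>*\<^sup>*
           (a \<otimes> x) (a \<otimes> x \<otimes> foldr (\<lambda>a b. a \<otimes> b) ws \<one>)"
    by (intro Cons.IH)
  moreover have "a \<otimes> x \<otimes> foldr (\<lambda>a b. a \<otimes> b) ws \<one> = a \<otimes> foldr (\<lambda>a b. a \<otimes> b) (x # ws) \<one>"
    using x Cons.prems(2) foldr_closed[OF assms(1) wsc] by (simp add: m_assoc)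
  ultimately have "(\<lambda>x y. x \<in> positive_cone G lt \<and> y \<in> positive_cone G lt \<and> word_dist G X x y \<le> r)\<^sup>*\<^sup>*
           (a \<otimes> x) (a \<otimes> foldr (\<lambda>a b. a \<otimes> b) (x # ws) \<one>)" by simp
  then show ?case using converse_rtranclp_into_rtranclp[of "\<lambda>x y. x \<in> positive_cone G lt \<and> y \<in> positive_cone G lt \<and> word_dist G X x y \<le> r" a "a \<otimes> x"] step
    by blast
qed


lemma finite_choice:
  assumes "\<forall>i\<le>(n::nat). \<exists>m::nat. \<forall>m'\<ge>m. Q i m'"
  shows "\<exists>K. \<forall>i\<le>n. Q i K"
proof -
  have "\<exists>K. \<forall>i\<le>n. \<forall>m'\<ge>K. Q i m'" using assms
  proof (induction n)
    case 0
    then show ?case by auto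
  next
    case (Suc n)
    then obtain K where K: "\<forall>i\<le>n. \<forall>m'\<ge>K. Q i m'" by auto
    obtain m where m: "\<forall>m'\<ge>m. Q (Suc n) m'" using Suc.prems by auto
    show ?case
      by (rule exI[of _ "max K m"]) (use K m in \<open>auto simp: le_Suc_eq\<close>)
  qed
  then show ?thesis by blast
qed

locale ctx = group G for G (structure) +
  fixes lt :: "'a \<Rightarrow> 'a \<Rightarrow> bool" and Z S X :: "'a set"
  assumes lto: "left_invariant_total_order G lt" and sub: "subgroup Z G"
    and central: "\<forall>z\<in>Z. \<forall>g\<in>carrier G. z \<otimes> g = g \<otimes> z"
    and Sfin: "finite S" and SZ: "S \<subseteq> Z" and Sgen: "generate G S = Z"
    and cof: "cofinal G lt Z"
    and Xfin: "finite X" and XG: "X \<subseteq> carrier G" and Xgen: "generate G X = carrier G"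
begin

lemma ZG: "Z \<subseteq> carrier G" using sub subgroup.subset by blast

lemma lt_trans: "x \<in> carrier G \<Longrightarrow> y \<in> carrier G \<Longrightarrow> z \<in> carrier G \<Longrightarrow> lt x y \<Longrightarrow> lt y z \<Longrightarrow> lt x z"
  using lto unfolding left_invariant_total_order_def by blast

lemma lt_total: "x \<in> carrier G \<Longrightarrow> y \<in> carrier G \<Longrightarrow> x = y \<or> lt x y \<or> lt y x"
  using lto unfolding left_invariant_total_order_def by blast

lemma lt_mult: "g \<in> carrier G \<Longrightarrow> x \<in> carrier G \<Longrightarrow> y \<in> carrier G \<Longrightarrow> lt x y \<Longrightarrow> lt (g \<otimes> x) (g \<otimes> y)"
  using lto unfolding left_invariant_total_order_def by blast

lemma le_trans: "x \<in> carrier G \<Longrightarrow> y \<in> carrier G \<Longrightarrow> z \<in> carrier G \<Longrightarrow> lt x y \<or> x = y \<Longrightarrow> lt y z \<or> y = z \<Longrightarrow> lt x z \<or> x = z"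
  using lt_trans by blast

lemma le_lt_trans: "x \<in> carrier G \<Longrightarrow> y \<in> carrier G \<Longrightarrow> z \<in> carrier G \<Longrightarrow> lt x y \<or> x = y \<Longrightarrow> lt y z \<Longrightarrow> lt x z"
  using lt_trans by blast

lemma le_mult: "g \<in> carrier G \<Longrightarrow> x \<in> carrier G \<Longrightarrow> y \<in> carrier G \<Longrightarrow> lt x y \<or> x = y \<Longrightarrow> lt (g \<otimes> x) (g \<otimes> y) \<or> g \<otimes> x = g \<otimes> y"
  using lt_mult by blast

lemma bigger:
  assumes "u \<in> carrier G" "w \<in> carrier G" "lt \<one> u"
  shows "\<exists>v\<in>{u,w}. lt \<one> v \<and> (lt u v \<or> u = v) \<and> (lt w v \<or> w = v)"
proof (cases "lt u w")
  case True
  then have "lt \<one> w" using lt_trans[of \<one> u w] assms by simp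
  then show ?thesis using True by auto
next
  case False
  then show ?thesis using lt_total[OF assms(1,2)] assms by auto
qed

lemma ub: "\<exists>u\<in>Z. lt \<one> u \<and> (\<forall>s\<in>S. (lt s u \<or> s = u) \<and> (lt (inv s) u \<or> inv s = u))"
proof -
  have "F \<subseteq> Z \<Longrightarrow> \<exists>u\<in>Z. lt \<one> u \<and> (\<forall>s\<in>F. (lt s u \<or> s = u) \<and> (lt (inv s) u \<or> inv s = u))"
    if "finite F" for F
    using that
  proof (induction F rule: finite_induct)
    case empty
    obtain h2 where "h2 \<in> Z" "lt \<one> h2" using cof unfolding cofinal_def by blast
    then show ?case by auto
  next
    case (insert t F)
    then obtain u where u: "u \<in> Z" "lt \<one> u" "\<forall>s\<in>F. (lt s u \<or> s = u) \<and> (lt (inv s) u \<or> inv s = u)"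
      by auto
    have tZ: "t \<in> Z" "inv t \<in> Z" using insert.prems subgroup.m_inv_closed[OF sub] by auto
    obtain v where v: "v \<in> {u, t}" "lt \<one> v" "lt u v \<or> u = v" "lt t v \<or> t = v"
      using bigger[of u t] u tZ ZG by blast
    have vZ: "v \<in> Z" using v u tZ by auto
    obtain v' where v': "v' \<in> {v, inv t}" "lt \<one> v'" "lt v v' \<or> v = v'" "lt (inv t) v' \<or> inv t = v'"
      using bigger[of v "inv t"] vZ v tZ ZG by blast
    have v'Z: "v' \<in> Z" using v' vZ tZ by auto
    have "\<forall>s\<in>insert t F. (lt s v' \<or> s = v') \<and> (lt (inv s) v' \<or> inv s = v')"
    proof
      fix s assume s: "s \<in> insert t F"
      show "(lt s v' \<or> s = v') \<and> (lt (inv s) v' \<or> inv s = v')"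
      proof (cases "s = t")
        case True
        then show ?thesis using le_trans[of t v v'] v v' tZ vZ v'Z ZG by blast
      next
        case False
        then have sF: "s \<in> F" using s by simp
        have sZ: "s \<in> Z" "inv s \<in> Z" using sF insert.prems subgroup.m_inv_closed[OF sub] by auto
        have uv': "lt u v' \<or> u = v'" using le_trans[of u v v'] v v' u vZ v'Z ZG by blast
        have G3: "s \<in> carrier G" "inv s \<in> carrier G" "u \<in> carrier G" "v' \<in> carrier G"
          using sZ u(1) v'Z ZG by auto
        have "lt s u \<or> s = u" "lt (inv s) u \<or> inv s = u" using u(3) sF by auto
        then show ?thesis using le_trans[OF G3(1,3,4)] le_trans[OF G3(2,3,4)] uv' by blast
      qed
    qed
    then show ?case using v'Z v' by blast
  qed
  then show ?thesis using Sfin SZ by blast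
qed

lemma pow_Z: "z \<in> Z \<Longrightarrow> z [^] (k::nat) \<in> Z"
  by (induction k) (auto simp: sub subgroup.one_closed subgroup.m_closed)

lemma conj_central: "w \<in> carrier G \<Longrightarrow> c \<in> Z \<Longrightarrow> inv w \<otimes> (c \<otimes> w) = c"
proof -
  assume w: "w \<in> carrier G" and c: "c \<in> Z"
  then have cc: "c \<in> carrier G" using ZG by auto
  have "c \<otimes> w = w \<otimes> c" using central c w by blast
  then show ?thesis using w cc by (simp add: m_assoc[symmetric])
qed

context
  fixes z0 assumes z0Z: "z0 \<in> Z" and z0pos: "lt \<one> z0"
    and z0S: "\<forall>s\<in>S. (lt s z0 \<or> s = z0) \<and> (lt (inv s) z0 \<or> inv s = z0)"
begin

lemma z0G: "z0 \<in> carrier G" using z0Z ZG by auto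

lemma bound: "h \<in> generate G S \<Longrightarrow> \<exists>m::nat. lt h (z0 [^] m) \<or> h = z0 [^] m"
proof (induction rule: generate.induct)
  case one
  then show ?case by (intro exI[of _ 0]) simp
next
  case (incl h)
  then show ?case using z0S z0G by (intro exI[of _ 1]) simp
next
  case (inv h)
  then show ?case using z0S z0G by (intro exI[of _ 1]) simp
next
  case (eng h1 h2)
  obtain a :: nat where a: "lt h1 (z0 [^] a) \<or> h1 = z0 [^] a" using eng by blast
  obtain b :: nat where b: "lt h2 (z0 [^] b) \<or> h2 = z0 [^] b" using eng by blast
  have hZ: "h1 \<in> Z" "h2 \<in> Z" using eng Sgen by auto
  then have hG: "h1 \<in> carrier G" "h2 \<in> carrier G" using ZG by auto
  have pa: "z0 [^] a \<in> Z" using pow_Z z0Z by blast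
  have paG: "z0 [^] a \<in> carrier G" "z0 [^] b \<in> carrier G" using z0G by auto
  have e1: "h1 \<otimes> h2 = h2 \<otimes> h1" using central hZ hG by blast
  have e2: "h2 \<otimes> z0 [^] a = z0 [^] a \<otimes> h2" using central pa hG by metis
  have l1: "lt (h2 \<otimes> h1) (h2 \<otimes> z0 [^] a) \<or> h2 \<otimes> h1 = h2 \<otimes> z0 [^] a"
    using le_mult[OF hG(2) hG(1) paG(1) a] .
  have l2: "lt (z0 [^] a \<otimes> h2) (z0 [^] a \<otimes> z0 [^] b) \<or> z0 [^] a \<otimes> h2 = z0 [^] a \<otimes> z0 [^] b"
    using le_mult[OF paG(1) hG(2) paG(2) b] .
  have "lt (h1 \<otimes> h2) (z0 [^] a \<otimes> z0 [^] b) \<or> h1 \<otimes> h2 = z0 [^] a \<otimes> z0 [^] b"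
    using le_trans[of "h2 \<otimes> h1" "h2 \<otimes> z0 [^] a" "z0 [^] a \<otimes> z0 [^] b"] l1 l2 e1 e2 hG paG by auto
  moreover have "z0 [^] a \<otimes> z0 [^] b = z0 [^] (a + b)" using nat_pow_mult[OF z0G, of a b] .
  ultimately show ?case by (intro exI[of _ "a + b"]) simp
qed

lemma pos_up: "w \<in> carrier G \<Longrightarrow> lt \<one> w \<Longrightarrow> lt \<one> (z0 [^] (k::nat) \<otimes> w)"
proof (induction k)
  case 0
  then show ?case by simp
next
  case (Suc k)
  have w': "z0 [^] k \<otimes> w \<in> carrier G" using Suc z0G by simp
  have e: "z0 [^] Suc k \<otimes> w = z0 \<otimes> (z0 [^] k \<otimes> w)"
    by (subst nat_pow_Suc2[OF z0G]) (use z0G Suc.prems in \<open>simp add: m_assoc\<close>)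
  have "lt (z0 \<otimes> \<one>) (z0 \<otimes> (z0 [^] k \<otimes> w))" using lt_mult[OF z0G _ w'] Suc by simp
  then have "lt z0 (z0 \<otimes> (z0 [^] k \<otimes> w))" using z0G by simp
  then show ?case using e lt_trans[of \<one> z0] z0pos z0G w' by simp
qed

lemma below: "y \<in> carrier G \<Longrightarrow> \<exists>m::nat. \<forall>m'\<ge>m. lt \<one> (z0 [^] m' \<otimes> y)"
proof -
  assume y: "y \<in> carrier G"
  obtain h1 where h1: "h1 \<in> Z" "lt h1 y" using cof y unfolding cofinal_def by blast
  have h1G: "h1 \<in> carrier G" using h1 ZG by auto
  have "inv h1 \<in> generate G S" using h1 Sgen subgroup.m_inv_closed[OF sub] by blast
  then obtain m :: nat where m: "lt (inv h1) (z0 [^] m) \<or> inv h1 = z0 [^] m" using bound by blast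
  have pm: "z0 [^] m \<in> Z" "z0 [^] m \<in> carrier G" using pow_Z z0Z z0G by auto
  have "lt (h1 \<otimes> inv h1) (h1 \<otimes> z0 [^] m) \<or> h1 \<otimes> inv h1 = h1 \<otimes> z0 [^] m"
    using le_mult[OF h1G _ pm(2) m] h1G by simp
  moreover have "h1 \<otimes> z0 [^] m = z0 [^] m \<otimes> h1" using central h1(1) pm(2) by blast
  moreover have "h1 \<otimes> inv h1 = \<one>" using h1G by simp
  ultimately have l1: "lt \<one> (z0 [^] m \<otimes> h1) \<or> \<one> = z0 [^] m \<otimes> h1"
    by simp
  have l2: "lt (z0 [^] m \<otimes> h1) (z0 [^] m \<otimes> y)" using lt_mult[OF pm(2) h1G y h1(2)] .
  have pos: "lt \<one> (z0 [^] m \<otimes> y)" using le_lt_trans[OF _ _ _ l1 l2] pm h1G y by simp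
  show ?thesis
  proof (intro exI[of _ m] allI impI)
    fix m' :: nat assume "m \<le> m'"
    then have "z0 [^] m' \<otimes> y = z0 [^] (m' - m) \<otimes> (z0 [^] m \<otimes> y)"
      using z0G y by (simp add: nat_pow_mult m_assoc[symmetric])
    then show "lt \<one> (z0 [^] m' \<otimes> y)" using pos_up[of "z0 [^] m \<otimes> y" "m' - m"] pos pm y by simp
  qed
qed


lemma main: "coarsely_connected G X (positive_cone G lt)"
proof -
  define P where "P = positive_cone G lt"
  define r where "r = max 1 (max (word_length G X z0) (word_length G X (inv z0)))"
  define R where "R = (\<lambda>x y. x \<in> P \<and> y \<in> P \<and> word_dist G X x y \<le> r)"
  have r1: "1 \<le> r" and rz: "word_length G X z0 \<le> r" and rzi: "word_length G X (inv z0) \<le> r"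
    unfolding r_def by auto
  have iz0Z: "inv z0 \<in> Z" using z0Z subgroup.m_inv_closed[OF sub] by blast
  have PD: "x \<in> P \<longleftrightarrow> x \<in> carrier G \<and> lt \<one> x" for x unfolding P_def positive_cone_def by simp
  have up: "g \<in> P \<Longrightarrow> R\<^sup>*\<^sup>* g (z0 [^] (k::nat) \<otimes> g)" for g k
  proof (induction k)
    case 0
    then show ?case using PD by simp
  next
    case (Suc k)
    have g: "g \<in> carrier G" "lt \<one> g" using Suc.prems PD by auto
    have w: "z0 [^] k \<otimes> g \<in> carrier G" using g z0G by simp
    have e: "z0 [^] Suc k \<otimes> g = z0 \<otimes> (z0 [^] k \<otimes> g)"
      by (subst nat_pow_Suc2[OF z0G]) (use z0G g in \<open>simp add: m_assoc\<close>)
    have "word_dist G X (z0 [^] k \<otimes> g) (z0 [^] Suc k \<otimes> g) = word_length G X z0"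
      unfolding word_dist_def e using conj_central[OF w z0Z] by simp
    moreover have "z0 [^] k \<otimes> g \<in> P" "z0 [^] Suc k \<otimes> g \<in> P"
      using pos_up[OF g(1,2), of k] pos_up[OF g(1,2), of "Suc k"] g(1) z0G PD by blast+
    ultimately have "R (z0 [^] k \<otimes> g) (z0 [^] Suc k \<otimes> g)" unfolding R_def using rz by simp
    then show ?case using Suc.IH Suc.prems by (meson rtranclp.rtrancl_into_rtrancl)
  qed
  have down: "h \<in> P \<Longrightarrow> R\<^sup>*\<^sup>* (z0 [^] (k::nat) \<otimes> h) h" for h k
  proof (induction k)
    case 0
    then show ?case using PD by simp
  next
    case (Suc k)
    have g: "h \<in> carrier G" "lt \<one> h" using Suc.prems PD by auto
    have w: "z0 [^] k \<otimes> h \<in> carrier G" using g z0G by simp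
    have e: "z0 [^] Suc k \<otimes> h = z0 \<otimes> (z0 [^] k \<otimes> h)"
      by (subst nat_pow_Suc2[OF z0G]) (use z0G g in \<open>simp add: m_assoc\<close>)
    have "inv (z0 \<otimes> (z0 [^] k \<otimes> h)) \<otimes> (z0 [^] k \<otimes> h) = inv (z0 [^] k \<otimes> h) \<otimes> (inv z0 \<otimes> (z0 [^] k \<otimes> h))"
      using w z0G by (simp add: inv_mult_group m_assoc)
    also have "\<dots> = inv z0" using conj_central[OF w iz0Z] .
    finally have "word_dist G X (z0 [^] Suc k \<otimes> h) (z0 [^] k \<otimes> h) = word_length G X (inv z0)"
      unfolding word_dist_def e by simp
    moreover have "z0 [^] k \<otimes> h \<in> P" "z0 [^] Suc k \<otimes> h \<in> P"
      using pos_up[OF g(1,2), of k] pos_up[OF g(1,2), of "Suc k"] g(1) z0G PD by blast+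
    ultimately have "R (z0 [^] Suc k \<otimes> h) (z0 [^] k \<otimes> h)" unfolding R_def using rzi by simp
    then show ?case using Suc.IH Suc.prems by (meson converse_rtranclp_into_rtranclp)
  qed
  have conn: "R\<^sup>*\<^sup>* a b" if a: "a \<in> P" and b: "b \<in> P" for a b
  proof -
    have aG: "a \<in> carrier G" and bG: "b \<in> carrier G" using a b PD by auto
    have "inv a \<otimes> b \<in> generate G X" using Xgen aG bG by simp
    then obtain ws where ws: "set ws \<subseteq> X \<union> (\<lambda>y. inv y) ` X"
      "foldr (\<lambda>a b. a \<otimes> b) ws \<one> = inv a \<otimes> b"
      using words_exist[OF is_group XG] by blast
    have wsc: "set ws \<subseteq> carrier G" using ws(1) XG by auto
    have tc: "foldr (\<lambda>a b. a \<otimes> b) (take i ws) \<one> \<in> carrier G" for i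
      using foldr_closed[OF is_group, of "take i ws"] wsc by (meson order_trans set_take_subset)
    have "\<forall>i\<le>length ws. \<exists>m::nat. \<forall>m'\<ge>m. lt \<one> (z0 [^] m' \<otimes> (a \<otimes> foldr (\<lambda>a b. a \<otimes> b) (take i ws) \<one>))"
      by (intro allI impI below) (use tc aG in simp)
    then have "\<exists>K::nat. \<forall>i\<le>length ws. lt \<one> (z0 [^] K \<otimes> (a \<otimes> foldr (\<lambda>a b. a \<otimes> b) (take i ws) \<one>))"
      by (rule finite_choice)
    then obtain K :: nat where K: "\<forall>i\<le>length ws. lt \<one> (z0 [^] K \<otimes> (a \<otimes> foldr (\<lambda>a b. a \<otimes> b) (take i ws) \<one>))"
      by blast
    define c where "c = z0 [^] K \<otimes> a"
    have cG: "c \<in> carrier G" unfolding c_def using z0G aG by simp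
    have "\<forall>i\<le>length ws. lt \<one> (c \<otimes> foldr (\<lambda>a b. a \<otimes> b) (take i ws) \<one>)"
    proof (intro allI impI)
      fix i assume "i \<le> length ws"
      then have "lt \<one> (z0 [^] K \<otimes> (a \<otimes> foldr (\<lambda>a b. a \<otimes> b) (take i ws) \<one>))" using K by blast
      moreover have "z0 [^] K \<otimes> (a \<otimes> foldr (\<lambda>a b. a \<otimes> b) (take i ws) \<one>) = c \<otimes> foldr (\<lambda>a b. a \<otimes> b) (take i ws) \<one>"
        unfolding c_def using tc[of i] z0G aG by (simp add: m_assoc)
      ultimately show "lt \<one> (c \<otimes> foldr (\<lambda>a b. a \<otimes> b) (take i ws) \<one>)" by simp
    qed
    then have m: "R\<^sup>*\<^sup>* c (c \<otimes> foldr (\<lambda>a b. a \<otimes> b) ws \<one>)"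
      unfolding R_def P_def by (rule mid_path[OF is_group XG ws(1) cG _ r1])
    have "c \<otimes> foldr (\<lambda>a b. a \<otimes> b) ws \<one> = z0 [^] K \<otimes> b"
      proof -
      have "a \<otimes> (inv a \<otimes> b) = b" using aG bG by (simp add: m_assoc[symmetric])
      then show ?thesis unfolding ws(2) c_def using z0G aG bG by (simp add: m_assoc)
    qed
    then have "R\<^sup>*\<^sup>* c (z0 [^] K \<otimes> b)" using m by simp
    then have "R\<^sup>*\<^sup>* (z0 [^] K \<otimes> a) (z0 [^] K \<otimes> b)" unfolding c_def .
    then show ?thesis using rtranclp_trans[OF rtranclp_trans[OF up[OF a, of K]] down[OF b, of K]] by blast
  qed
  have RP: "R x y \<Longrightarrow> x \<in> P \<and> y \<in> P" for x y unfolding R_def by simp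
  show ?thesis unfolding coarsely_connected_def P_def[symmetric]
  proof (intro exI[of _ r] conjI ballI r1)
    fix a b assume a: "a \<in> P" and b: "b \<in> P"
    obtain ss where ss: "ss \<noteq> []" "hd ss = a" "last ss = b" "set ss \<subseteq> P"
      "\<forall>i. Suc i < length ss \<longrightarrow> R (ss!i) (ss!Suc i)"
      using path_of_rtranclp[OF conn[OF a b], of P] RP a by blast
    show "\<exists>ss. ss \<noteq> [] \<and> hd ss = a \<and> last ss = b \<and> set ss \<subseteq> P \<and>
        (\<forall>i. Suc i < length ss \<longrightarrow> word_dist G X (ss ! i) (ss ! Suc i) \<le> r)"
      using ss unfolding R_def by blast
  qed
qed

end

lemma main_ctx: "coarsely_connected G X (positive_cone G lt)"
  using ub main by blast

end

theorem lemma4p14: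
  fixes G :: "('a, 'b) monoid_scheme" and lt :: "'a \<Rightarrow> 'a \<Rightarrow> bool"
    and Z :: "'a set" and X :: "'a set"
  assumes "group G"
    and "left_invariant_total_order G lt"
    and "subgroup Z G"
    and "\<forall>z\<in>Z. \<forall>g\<in>carrier G. z \<otimes>\<^bsub>G\<^esub> g = g \<otimes>\<^bsub>G\<^esub> z"
    and "\<exists>S. finite S \<and> S \<subseteq> Z \<and> generate G S = Z"
    and "cofinal G lt Z"
    and "finite X" and "X \<subseteq> carrier G" and "generate G X = carrier G"
  shows "coarsely_connected G X (positive_cone G lt)"
proof -
  obtain S where "finite S" "S \<subseteq> Z" "generate G S = Z" using assms(5) by blast
  then have "ctx G lt Z S X"
    using assms by (simp add: ctx_def ctx_axioms_def)
  then interpret ctx G lt Z S X .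
  show ?thesis by (rule main_ctx)
qed

end
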